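(* Let $N\ge2$ and consider the function $$D(p)=2\log N+\frac1N\sum_{k=1}^N(\log p_k)^2-\frac1{N^2}\Big(\sum_{k=1}^N\log p_k\Big)^2+\frac2N\sum_{k=1}^N\log p_k$$ on the open simplex $\{p=(p_1,\dots,p_N): p_k>0,\ \sum_k p_k=1\}$. If $p$ is a point of local extremum of $D$ on this set, then either $p=(1/N,\dots,1/N)$ or the coordinates of $p$ take exactly two distinct values.
   Context: For a probability vector $p$ with all $p_k>0$, $D(p)$ equals $\lim_{\alpha\to0+}\frac{\partial^2}{\partial\alpha^2}\mathcal H_\alpha(p)$, where $\mathcal H_\alpha(p)=\frac{1}{1-\alpha}\log\sum_{k=1}^N p_k^\alpha$ is the Rényi entropy; the paper denotes it $\mathcal H''_0(p)$. Logarithms are natural. *)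

theory Defs
  imports "HOL-Analysis.Analysis"
begin

definition open_simplex :: "(real ^ 'n) set" where
  "open_simplex = {p. (\<forall>k. p $ k > 0) \<and> (\<Sum>k\<in>UNIV. p $ k) = 1}"

definition Dfun :: "real ^ 'n \<Rightarrow> real" where
  "Dfun p = (let N = real CARD('n) in
     2 * ln N + (1 / N) * (\<Sum>k\<in>UNIV. (ln (p $ k))^2)
     - (1 / N^2) * (\<Sum>k\<in>UNIV. ln (p $ k))^2
     + (2 / N) * (\<Sum>k\<in>UNIV. ln (p $ k)))"

definition local_max_on :: "('a::metric_space \<Rightarrow> real) \<Rightarrow> 'a set \<Rightarrow> 'a \<Rightarrow> bool" where
  "local_max_on f S x \<longleftrightarrow> x \<in> S \<and> (\<exists>e>0. \<forall>y\<in>S. dist y x < e \<longrightarrow> f y \<le> f x)"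

definition local_min_on :: "('a::metric_space \<Rightarrow> real) \<Rightarrow> 'a set \<Rightarrow> 'a \<Rightarrow> bool" where
  "local_min_on f S x \<longleftrightarrow> x \<in> S \<and> (\<exists>e>0. \<forall>y\<in>S. dist y x < e \<longrightarrow> f x \<le> f y)"

end

theory Submission
  imports Defs
begin



lemma h_deriv:
  fixes t a :: real
  assumes "t > 0"
  shows "((\<lambda>x. (ln x + a) / x) has_field_derivative ((1 - ln t - a) / t^2)) (at t)"
proof -
  have "((\<lambda>x. (ln x + a) / x) has_field_derivative ((1/t * t - (ln t + a) * 1) / (t*t))) (at t)"
    using assms by (auto intro!: derivative_eq_intros)
  moreover have "(1/t * t - (ln t + a) * 1) / (t*t) = (1 - ln t - a) / t^2"
    using assms by (simp add: power2_eq_square)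
  ultimately show ?thesis by simp
qed

lemma h_zero_unique:
  fixes a b c :: real
  assumes "a < b" "0 < a" "(ln a + c)/a = (ln b + c)/b"
  shows "\<exists>z. a < z \<and> z < b \<and> ln z = 1 - c"
proof -
  have "\<exists>z. a < z \<and> z < b \<and> ((*) ((1 - ln z - c) / z^2)) = (\<lambda>v. 0)"
  proof (rule Rolle_deriv[where f="\<lambda>x. (ln x + c) / x"])
    show "a < b" "(ln a + c)/a = (ln b + c)/b" using assms by auto
    show "continuous_on {a..b} (\<lambda>x. (ln x + c) / x)"
      using assms by (intro continuous_intros) auto
    fix x assume "a < x" "x < b"
    then have "x > 0" using assms by linarith
    then show "((\<lambda>x. (ln x + c) / x) has_derivative ((*) ((1 - ln x - c) / x^2))) (at x)"
      using h_deriv[of x c, OF `x > 0`] unfolding has_field_derivative_def by blast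
  qed
  then obtain z where z: "a < z" "z < b" "((*) ((1 - ln z - c) / z^2)) = (\<lambda>v. 0)" by blast
  from fun_cong[OF z(3), of 1] z(1) assms(2) have "1 - ln z - c = 0" by simp
  with z show ?thesis by auto
qed

lemma h_three:
  fixes x y z c :: real
  assumes "0 < x" "x < y" "y < z" "(ln x + c)/x = (ln y + c)/y" "(ln y + c)/y = (ln z + c)/z"
  shows False
proof -
  obtain u where u: "x < u" "u < y" "ln u = 1 - c" using h_zero_unique assms by blast
  have "0 < y" using assms by linarith
  then obtain w where w: "y < w" "w < z" "ln w = 1 - c" using h_zero_unique[of y z c] assms by blast
  have "u > 0" "w > 0" using u w assms by auto
  then have "u = w" using u w by (metis ln_inj_iff)
  with u w show False by simp
qed


lemma sum_cc:
  fixes f :: "'n::finite \<Rightarrow> real"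
  assumes "i \<noteq> j"
  shows "(\<Sum>k\<in>UNIV. f k * (if k = i then 1 else if k = j then -1 else 0)) = f i - f j"
proof -
  have "(\<Sum>k\<in>UNIV. f k * (if k = i then 1 else if k = j then -1 else 0))
      = (\<Sum>k\<in>UNIV. (if k = i then f k else 0) - (if k = j then f k else 0))"
    using assms by (intro sum.cong) auto
  also have "\<dots> = f i - f j" by (simp add: sum_subtractf)
  finally show ?thesis .
qed

lemma key_eq:
  fixes p :: "real ^ 'n"
  assumes ext: "local_max_on Dfun open_simplex p \<or> local_min_on Dfun open_simplex p"
    and ij: "i \<noteq> j"
  shows "(ln (p$i) + (1 - (\<Sum>k\<in>UNIV. ln (p $ k)) / real CARD('n))) / p$i
       = (ln (p$j) + (1 - (\<Sum>k\<in>UNIV. ln (p $ k)) / real CARD('n))) / p$j"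
proof -
  define N where "N = real CARD('n)"
  define S where "S = (\<Sum>k\<in>UNIV. ln (p $ k))"
  have N: "N > 0" unfolding N_def by simp
  have pS: "p \<in> open_simplex" using ext unfolding local_max_on_def local_min_on_def by blast
  then have pos: "\<And>k. p $ k > 0" and s1: "(\<Sum>k\<in>UNIV. p $ k) = 1"
    unfolding open_simplex_def by auto
  obtain e where e: "e > 0" and
    E: "(\<forall>y\<in>open_simplex. dist y p < e \<longrightarrow> Dfun y \<le> Dfun p) \<or>
        (\<forall>y\<in>open_simplex. dist y p < e \<longrightarrow> Dfun p \<le> Dfun y)"
    using ext unfolding local_max_on_def local_min_on_def by blast
  define cc :: "'n \<Rightarrow> real" where "cc k = (if k = i then 1 else if k = j then -1 else 0)" for k
  define q where "q t = (\<chi> k. p $ k + t * cc k)" for t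
  define g where "g t = Dfun (q t)" for t
  have g_eq: "g = (\<lambda>t. 2 * ln N + (1 / N) * (\<Sum>k\<in>UNIV. (ln (p $ k + t * cc k))^2)
     - (1 / N^2) * (\<Sum>k\<in>UNIV. ln (p $ k + t * cc k))^2
     + (2 / N) * (\<Sum>k\<in>UNIV. ln (p $ k + t * cc k)))"
    unfolding g_def q_def Dfun_def Let_def N_def by simp
  define L where "L = (1 / N) * (\<Sum>k\<in>UNIV. 2 * ln (p $ k) * (cc k / p $ k))
     - (1 / N^2) * (2 * S * (\<Sum>k\<in>UNIV. cc k / p $ k))
     + (2 / N) * (\<Sum>k\<in>UNIV. cc k / p $ k)"
  have D: "(g has_field_derivative L) (at 0)"
    unfolding g_eq L_def S_def
    using pos N by (auto intro!: derivative_eq_intros simp: field_simps)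
  define d where "d = min (e/3) (min (p$i) (p$j))"
  have d: "d > 0" unfolding d_def using e pos by auto
  have qin: "q t \<in> open_simplex \<and> dist (q t) p < e" if "\<bar>0 - t\<bar> < d" for t
  proof -
    have t1: "\<bar>t\<bar> < p$i" "\<bar>t\<bar> < p$j" "\<bar>t\<bar> < e/3" using that unfolding d_def by auto
    have "q t $ k > 0" for k
      using t1 pos[of k] unfolding q_def cc_def by auto
    moreover have "(\<Sum>k\<in>UNIV. q t $ k) = 1"
    proof -
      have "(\<Sum>k\<in>UNIV. q t $ k) = (\<Sum>k\<in>UNIV. p $ k) + t * (\<Sum>k\<in>UNIV. 1 * cc k)"
        unfolding q_def by (simp add: sum.distrib sum_distrib_left)
      also have "(\<Sum>k\<in>UNIV. 1 * cc k) = 0" unfolding cc_def using sum_cc[OF ij, of "\<lambda>_. 1"] by simp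
      finally show ?thesis using s1 by simp
    qed
    moreover have "dist (q t) p < e"
    proof -
      have "dist (q t) p = norm (q t - p)" by (simp add: dist_norm)
      also have "\<dots> \<le> (\<Sum>k\<in>UNIV. \<bar>(q t - p) $ k\<bar>)" by (rule norm_le_l1_cart)
      also have "\<dots> = (\<Sum>k\<in>UNIV. \<bar>t\<bar> * (cc k * cc k))"
        unfolding q_def cc_def by (intro sum.cong) (auto simp: abs_mult)
      also have "\<dots> = \<bar>t\<bar> * 2"
        using sum_cc[OF ij, of cc] ij unfolding cc_def by (simp add: sum_distrib_left[symmetric])
      finally show ?thesis using t1 by linarith
    qed
    ultimately show ?thesis unfolding open_simplex_def by auto
  qed
  have q0: "q 0 = p" unfolding q_def by (simp add: vec_eq_iff)
  have "L = 0"
    using E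
  proof
    assume A: "\<forall>y\<in>open_simplex. dist y p < e \<longrightarrow> Dfun y \<le> Dfun p"
    show "L = 0"
    proof (rule DERIV_local_max[OF D d])
      show "\<forall>y. \<bar>0 - y\<bar> < d \<longrightarrow> g y \<le> g 0"
        using A qin q0 unfolding g_def by auto
    qed
  next
    assume A: "\<forall>y\<in>open_simplex. dist y p < e \<longrightarrow> Dfun p \<le> Dfun y"
    show "L = 0"
    proof (rule DERIV_local_min[OF D d])
      show "\<forall>y. \<bar>0 - y\<bar> < d \<longrightarrow> g 0 \<le> g y"
        using A qin q0 unfolding g_def by auto
    qed
  qed
  have s2: "(\<Sum>k\<in>UNIV. 2 * ln (p $ k) * (cc k / p $ k)) = 2 * ln (p$i) / p$i - 2 * ln (p$j) / p$j"
    using sum_cc[OF ij, of "\<lambda>k. 2 * ln (p $ k) / p $ k"] unfolding cc_def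
    by (simp add: field_simps)
  have s3: "(\<Sum>k\<in>UNIV. cc k / p $ k) = 1 / p$i - 1 / p$j"
    using sum_cc[OF ij, of "\<lambda>k. 1 / p $ k"] unfolding cc_def
    by (simp add: field_simps)
  define A where "A = (ln (p$i) + (1 - S / N)) / p$i"
  define B where "B = (ln (p$j) + (1 - S / N)) / p$j"
  have "L = (2 / N) * (A - B)"
    unfolding L_def s2 s3 A_def B_def using N pos[of i] pos[of j]
    by (simp add: field_simps power2_eq_square)
  with \<open>L = 0\<close> N have "A - B = 0" by simp
  then have "A = B" by simp
  then show ?thesis unfolding A_def B_def N_def S_def .
qed

lemma h_three_gen:
  fixes x y z c :: real
  assumes "0 < x" "0 < y" "0 < z" "x \<noteq> y" "y \<noteq> z" "x \<noteq> z"
    "(ln x + c)/x = (ln y + c)/y" "(ln y + c)/y = (ln z + c)/z"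
  shows False
proof -
  have hx: "(ln x + c)/x = (ln z + c)/z" using assms by simp
  show False
    using assms hx h_three[of x y z c] h_three[of x z y c] h_three[of y x z c]
      h_three[of y z x c] h_three[of z x y c] h_three[of z y x c]
    by (metis linorder_neqE_linordered_idom)
qed

theorem mainTheorem2:
  fixes p :: "real ^ 'n"
  assumes "CARD('n) \<ge> 2"
    and "local_max_on Dfun open_simplex p \<or> local_min_on Dfun open_simplex p"
  shows "p = (\<chi> k. 1 / real CARD('n)) \<or> card (range (\<lambda>k. p $ k)) = 2"
proof -
  define c where "c = 1 - (\<Sum>k\<in>UNIV. ln (p $ k)) / real CARD('n)"
  have H: "(ln (p$i) + c) / p$i = (ln (p$j) + c) / p$j" for i j
    using key_eq[OF assms(2), of i j] unfolding c_def by (cases "i = j") auto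
  have pS: "p \<in> open_simplex" using assms(2) unfolding local_max_on_def local_min_on_def by blast
  then have pos: "\<And>k. p $ k > 0" and s1: "(\<Sum>k\<in>UNIV. p $ k) = 1"
    unfolding open_simplex_def by auto
  define a where "a = p $ undefined"
  show ?thesis
  proof (cases "\<forall>k. p $ k = a")
    case True
    then have "(\<Sum>k\<in>UNIV. p $ k) = real CARD('n) * a" by simp
    with s1 have "a = 1 / real CARD('n)" using assms(1)
      by (simp add: field_simps)
    then show ?thesis using True by (simp add: vec_eq_iff)
  next
    case False
    then obtain j where j: "p $ j \<noteq> a" by blast
    have sub: "range (\<lambda>k. p $ k) \<subseteq> {a, p $ j}"
    proof
      fix x assume "x \<in> range (\<lambda>k. p $ k)"
      then obtain k where k: "x = p $ k" by blast
      show "x \<in> {a, p $ j}"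
      proof (rule ccontr)
        assume "x \<notin> {a, p $ j}"
        then show False
          using h_three_gen[of a "p$j" x c] pos j H k unfolding a_def by auto
      qed
    qed
    moreover have "{a, p $ j} \<subseteq> range (\<lambda>k. p $ k)" unfolding a_def by auto
    ultimately have "range (\<lambda>k. p $ k) = {a, p $ j}" by blast
    then show ?thesis using j by simp
  qed
qed

end
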